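(* Let $S\subsetneq\mathbb{S}$ be nonempty, let $j^*=\min(\mathbb{S}\setminus S)$ (the highest-quality product not in $S$), and set $q^{\max}=\bar q_0(S)$, $q^{\min}=\bar q_0(S\cup\{j^*\})$ (so $q^{\min}<q^{\max}$). For $q\in(0,1)$ let $v_i(q)=V(qe^{\theta_i-1})$ and $$R_S(q)=\sum_{i\in S}\frac{v_i(q)}{1-v_i(q)}+\frac{1}{q+\sum_{i\in S}v_i(q)}-1 .$$ Assume $v_i(q)<1/2$ for all $i\in S$ and all $q\in[q^{\min},q^{\max}]$. Then $R_S$ is quasi-convex on $[q^{\min},q^{\max}]$.
   Context: Sellers $\mathbb{S}=\{1,\dots,n\}$ with qualities $\theta_1\ge\dots\ge\theta_n\ge0$. $V:(0,\infty)\to(0,1)$: $V(x)=$ the unique $v\in(0,1)$ with $v\exp(v/(1-v))=x$. For nonempty $T\subseteq\mathbb{S}$, $\bar q_0(T)\in(0,1)$ is the unique solution of $\sum_{i\in T}V(\bar q_0e^{\theta_i-1})=1-\bar q_0$. (For $j\notin S$, $R_S(\bar q_0(S\cup\{j\}))$ is the Bertrand equilibrium revenue of displaying $S\cup\{j\}$, and $R_S(\bar q_0(S))$ that of displaying $S$.) A function $f$ on an interval is quasi-convex if $f(\lambda x+(1-\lambda)y)\le\max\{f(x),f(y)\}$ for all $x,y$ in the interval and $\lambda\in[0,1]$. *)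

theory Defs
  imports "HOL-Analysis.Analysis"
begin

definition V :: "real \<Rightarrow> real" where
  "V x = (THE v. 0 < v \<and> v < 1 \<and> v * exp (v / (1 - v)) = x)"

definition qbar0 :: "(nat \<Rightarrow> real) \<Rightarrow> nat set \<Rightarrow> real" where
  "qbar0 \<theta> T = (THE q. 0 < q \<and> q < 1 \<and>
      (\<Sum>i\<in>T. V (q * exp (\<theta> i - 1))) = 1 - q)"

definition vfun :: "(nat \<Rightarrow> real) \<Rightarrow> nat \<Rightarrow> real \<Rightarrow> real" where
  "vfun \<theta> i q = V (q * exp (\<theta> i - 1))"

definition RS :: "(nat \<Rightarrow> real) \<Rightarrow> nat set \<Rightarrow> real \<Rightarrow> real" where
  "RS \<theta> S q = (\<Sum>i\<in>S. vfun \<theta> i q / (1 - vfun \<theta> i q))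
      + 1 / (q + (\<Sum>i\<in>S. vfun \<theta> i q)) - 1"

definition quasi_convex_on :: "real set \<Rightarrow> (real \<Rightarrow> real) \<Rightarrow> bool" where
  "quasi_convex_on I f \<longleftrightarrow> (\<forall>x\<in>I. \<forall>y\<in>I. \<forall>t::real. 0 \<le> t \<and> t \<le> 1 \<longrightarrow>
      f (t * x + (1 - t) * y) \<le> max (f x) (f y))"

end

theory Submission
  imports Defs
begin

definition gg :: "real \<Rightarrow> real" where "gg v = v * exp (v / (1 - v))"

lemma gg_pos: "0 < v \<Longrightarrow> 0 < gg v" by (simp add: gg_def)

lemma gg_strict: assumes "0 < u" "u < w" "w < 1" shows "gg u < gg w"
proof -
  have "u/(1-u) < w/(1-w)" using assms by (simp add: field_simps)
  hence "exp (u/(1-u)) < exp (w/(1-w))" by simp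
  thus ?thesis unfolding gg_def using assms
    using mult_strict_mono[of u w "exp(u/(1-u))" "exp(w/(1-w))"] by simp
qed

lemma gg_cont: "v \<noteq> 1 \<Longrightarrow> isCont gg v"
  unfolding gg_def by (intro continuous_intros) auto

lemma gg_deriv: "v \<noteq> 1 \<Longrightarrow> (gg has_real_derivative exp (v/(1-v)) * (1 + v/(1-v)^2)) (at v)"
  unfolding gg_def
  apply (rule derivative_eq_intros refl | simp)+
  apply (simp add: field_simps power2_eq_square)
  done

lemma gg_ex: assumes "0 < x" shows "\<exists>v. 0 < v \<and> v < 1 \<and> gg v = x"
proof -
  define a where "a = min (1/2) (x / (2 * exp 1))"
  define b where "b = (x+1)/(x+2)"
  have a0: "0 < a" "a \<le> 1/2" using assms by (auto simp: a_def)
  have b1: "1/2 \<le> b" "b < 1" using assms by (auto simp: b_def field_simps)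
  have "a/(1-a) \<le> 1" using a0 by (simp add: field_simps)
  hence "exp (a/(1-a)) \<le> exp 1" by simp
  hence "gg a \<le> a * exp 1" unfolding gg_def using a0 by (simp add: mult_left_mono)
  also have "\<dots> \<le> x/(2*exp 1) * exp 1" unfolding a_def
    by (intro mult_right_mono) auto
  also have "\<dots> = x/2" by simp
  finally have ga: "gg a \<le> x" using assms by simp
  have "b/(1-b) = x+1" using assms by (simp add: b_def field_simps)
  hence "gg b = b * exp (x+1)" by (simp add: gg_def)
  also have "\<dots> \<ge> b * (x+2)" using b1 exp_ge_add_one_self[of "x+1"]
    by (intro mult_left_mono) auto
  finally have gb: "x \<le> gg b" using assms by (simp add: b_def)
  have "continuous_on {a..b} gg"
    using a0 b1 by (intro continuous_at_imp_continuous_on ballI gg_cont) auto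
  then obtain v where "a \<le> v" "v \<le> b" "gg v = x"
    using IVT'[of gg a x b] ga gb a0 b1 by auto
  thus ?thesis using a0 b1 by (intro exI[of _ v]) auto
qed

lemma gg_inj: "0 < u \<Longrightarrow> u < 1 \<Longrightarrow> 0 < w \<Longrightarrow> w < 1 \<Longrightarrow> gg u = gg w \<Longrightarrow> u = w"
proof (rule ccontr)
  assume "0 < u" "u < 1" "0 < w" "w < 1" "gg u = gg w" "u \<noteq> w"
  thus False using gg_strict[of u w] gg_strict[of w u] by (cases "u < w") auto
qed

lemma V_prop: assumes "0 < x" shows "0 < V x \<and> V x < 1 \<and> gg (V x) = x"
proof -
  have "\<exists>!v. 0 < v \<and> v < 1 \<and> v * exp (v / (1 - v)) = x"
  proof -
    obtain v where v: "0 < v" "v < 1" "gg v = x" using gg_ex[OF assms] by blast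
    show ?thesis
    proof (rule ex1I[of _ v])
      show "0 < v \<and> v < 1 \<and> v * exp (v / (1 - v)) = x" using v unfolding gg_def by blast
      fix u assume u: "0 < u \<and> u < 1 \<and> u * exp (u / (1 - u)) = x"
      hence "gg u = gg v" using v(3) unfolding gg_def by simp
      thus "u = v" using gg_inj[of u v] u v by blast
    qed
  qed
  from theI'[OF this] show ?thesis unfolding V_def gg_def by blast
qed

lemma V_gg: "0 < v \<Longrightarrow> v < 1 \<Longrightarrow> V (gg v) = v"
  using V_prop[OF gg_pos[of v]] gg_inj[of "V (gg v)" v] by auto

lemma V_le: "0 < x \<Longrightarrow> V x \<le> x"
proof -
  assume x: "0 < x"
  have v: "0 < V x" "V x < 1" "V x * exp (V x / (1 - V x)) = x" using V_prop[OF x] unfolding gg_def by auto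
  have "1 \<le> exp (V x / (1 - V x))" using v by simp
  hence "V x * 1 \<le> V x * exp (V x / (1 - V x))" using v by (intro mult_left_mono) auto
  thus ?thesis using v by simp
qed

lemma V_strict: "0 < x \<Longrightarrow> x < y \<Longrightarrow> V x < V y"
proof (rule ccontr)
  assume a: "0 < x" "x < y" "\<not> V x < V y"
  have "0 < y" using a by auto
  have "gg (V y) \<le> gg (V x)" using a V_prop[of x] V_prop[of y] gg_strict[of "V y" "V x"]
    by (cases "V x = V y") auto
  thus False using a V_prop[of x] V_prop[of y] by auto
qed

lemma V_cont: assumes "0 < x" shows "isCont V x"
proof -
  let ?v = "V x"
  have v: "0 < ?v" "?v < 1" "gg ?v = x" using V_prop[OF assms] by auto
  define d where "d = min (?v/2) ((1 - ?v)/2)"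
  have d: "0 < d" using v by (simp add: d_def)
  have zb: "0 < z \<and> z < 1" if "\<bar>z - ?v\<bar> \<le> d" for z
  proof -
    have "z - ?v \<le> d" "?v - z \<le> d" using that by auto
    moreover have "d \<le> ?v/2" "d \<le> (1 - ?v)/2" unfolding d_def by (auto simp: min_def)
    ultimately show ?thesis using v(1,2) by (simp_all add: field_simps)
  qed
  have "isCont V (gg ?v)"
    by (rule isCont_inverse_function[OF d]) (auto dest!: zb intro: V_gg gg_cont)
  thus ?thesis using v by simp
qed

definition aa :: "real \<Rightarrow> real" where "aa v = v * (1-v)^2 / (1 - v + v^2)"

lemma pp_pos: "0 < 1 - v + (v::real)^2"
proof -
  have "1 - v + v^2 = (v - 1/2)^2 + 3/4" by (simp add: power2_eq_square algebra_simps)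
  moreover have "0 \<le> (v - 1/2)^2" by simp
  ultimately show ?thesis by linarith
qed

lemma helper1: "(v::real) \<noteq> 0 \<Longrightarrow> w / (E * p) = v * w / p / (v * E)"
  by (simp add: field_simps)

lemma V_deriv: assumes "0 < x" shows "(V has_real_derivative aa (V x) / x) (at x)"
proof -
  let ?v = "V x"
  have v: "0 < ?v" "?v < 1" "gg ?v = x" using V_prop[OF assms] by auto
  let ?D = "exp (?v/(1-?v)) * (1 + ?v/(1-?v)^2)"
  have D: "0 < ?D" using v by (intro mult_pos_pos add_pos_pos divide_pos_pos) auto
  have "(V has_real_derivative inverse ?D) (at x)"
  proof (rule DERIV_inverse_function[where f=gg and a=0 and b="x+1"])
    show "(gg has_real_derivative ?D) (at (V x))" using gg_deriv[of ?v] v by simp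
    show "?D \<noteq> 0" by (rule not_sym, rule less_imp_neq, rule D)
    show "0 < x" "x < x + 1" using assms by auto
    show "gg (V y) = y" if "0 < y" "y < x + 1" for y using V_prop[of y] that by simp
    show "isCont V x" by (rule V_cont[OF assms])
  qed
  moreover have "inverse ?D = aa ?v / x"
  proof -
    define E where "E = exp (?v/(1-?v))"
    have E: "0 < E" by (simp add: E_def)
    have xv: "x = ?v * E" using v by (simp add: gg_def E_def)
    have p: "0 < 1 - ?v + ?v^2" by (rule pp_pos)
    have d: "(1-?v)^2 \<noteq> 0" using v by simp
    have "1 + ?v/(1-?v)^2 = ((1-?v)^2 + ?v)/(1-?v)^2"
      by (metis d add_divide_distrib divide_self)
    also have "(1-?v)^2 + ?v = 1 - ?v + ?v^2" by (simp add: power2_eq_square algebra_simps)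
    finally have 1: "1 + ?v/(1-?v)^2 = (1 - ?v + ?v^2)/(1-?v)^2" .
    have "inverse ?D = (1-?v)^2 / (E * (1 - ?v + ?v^2))"
      unfolding E_def[symmetric] 1 using v E p by (simp add: field_simps)
    also have "\<dots> = aa ?v / (?v * E)" unfolding aa_def
      by (rule helper1) (use v(1) in simp)
    also have "\<dots> = aa ?v / x" by (simp only: xv[symmetric])
    finally show ?thesis .
  qed
  ultimately show ?thesis by simp
qed



lemma pair_ineq:
  fixes a b v w :: real
  assumes "0 < a" "a \<le> v" "v \<le> 3 * a" "0 < b" "b \<le> w" "w \<le> 3 * b"
  shows "a^2/v * w + b^2/w * v \<le> 4 * a * b"
proof -
  have v0: "0 < v" "0 < w" using assms by auto
  define xx where "xx = a * w"
  define yy where "yy = b * v"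
  have "a * w \<le> 3 * a * b" using assms by (simp add: mult_left_mono)
  also have "3 * a * b \<le> 3 * b * v" using assms by (simp add: mult_left_mono)
  finally have xx3: "xx \<le> 3 * yy" by (simp add: xx_def yy_def)
  have "b * v \<le> 3 * a * b" using assms by (simp add: mult_left_mono mult.commute)
  also have "3 * a * b \<le> 3 * a * w" using assms by (simp add: mult_left_mono)
  finally have yy3: "yy \<le> 3 * xx" by (simp add: xx_def yy_def)
  have "0 \<le> (3 * yy - xx) * (3 * xx - yy)" using xx3 yy3 by simp
  hence "3 * xx^2 + 3 * yy^2 \<le> 10 * xx * yy" by (simp add: algebra_simps power2_eq_square)
  moreover have "0 \<le> xx * yy" unfolding xx_def yy_def using assms v0 by simp
  ultimately have "xx^2 + yy^2 \<le> 4 * xx * yy" by linarith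
  hence "(a * w)^2 + (b * v)^2 \<le> 4 * a * b * (v * w)" by (simp add: xx_def yy_def algebra_simps)
  moreover have "a^2/v * w + b^2/w * v = ((a * w)^2 + (b * v)^2) / (v * w)"
    using v0 by (simp add: field_simps power2_eq_square)
  ultimately show ?thesis using v0 by (simp add: divide_le_eq mult_pos_pos)
qed



lemma V_pos: "0 < x \<Longrightarrow> 0 < V x" using V_prop by blast

lemma qbar0_pos:
  assumes T: "finite T" "T \<noteq> {}"
  shows "0 < qbar0 \<theta> T"
proof -
  define c where "c i = exp (\<theta> i - 1)" for i
  have c: "0 < c i" for i by (simp add: c_def)
  define f where "f q = (\<Sum>i\<in>T. V (q * c i)) + q" for q
  have fstrict: "f x < f y" if "0 < x" "x < y" for x y
  proof -
    have "(\<Sum>i\<in>T. V (x * c i)) \<le> (\<Sum>i\<in>T. V (y * c i))"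
      using that c by (intro sum_mono less_imp_le V_strict) (auto simp: mult_strict_right_mono)
    thus ?thesis using that by (simp add: f_def)
  qed
  define q0 where "q0 = 1 / ((\<Sum>i\<in>T. c i) + 2)"
  have sc: "0 \<le> (\<Sum>i\<in>T. c i)" using c by (simp add: sum_nonneg less_imp_le)
  have q0: "0 < q0" "q0 < 1" using sc by (auto simp: q0_def field_simps)
  have "(\<Sum>i\<in>T. V (q0 * c i)) \<le> (\<Sum>i\<in>T. q0 * c i)"
    using q0 c by (intro sum_mono V_le) simp
  hence "f q0 \<le> q0 * ((\<Sum>i\<in>T. c i) + 1)" by (simp add: f_def sum_distrib_left algebra_simps)
  also have "\<dots> < 1" using sc by (simp add: q0_def field_simps)
  finally have fq0: "f q0 \<le> 1" by simp
  have "0 < (\<Sum>i\<in>T. V (1 * c i))" using T c by (intro sum_pos V_pos) auto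
  hence f1: "1 < f 1" by (simp add: f_def)
  have "continuous_on {q0..1} f" unfolding f_def using q0 c
    by (intro continuous_at_imp_continuous_on ballI continuous_intros
        continuous_at_compose[of _ "\<lambda>q. q * c _" V, unfolded o_def] V_cont) auto
  then obtain q where q: "q0 \<le> q" "q \<le> 1" "f q = 1" using IVT'[of f q0 1 1] fq0 f1 q0 by auto
  have q1: "q < 1" using q f1 by (cases "q = 1") auto
  have ex1: "\<exists>!q. 0 < q \<and> q < 1 \<and> (\<Sum>i\<in>T. V (q * exp (\<theta> i - 1))) = 1 - q"
  proof (rule ex1I[of _ q])
    show "0 < q \<and> q < 1 \<and> (\<Sum>i\<in>T. V (q * exp (\<theta> i - 1))) = 1 - q"
      using q q0 q1 by (simp add: f_def c_def)
    fix r assume r: "0 < r \<and> r < 1 \<and> (\<Sum>i\<in>T. V (r * exp (\<theta> i - 1))) = 1 - r"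
    hence fr: "f r = 1" by (simp add: f_def c_def)
    show "r = q"
    proof (rule ccontr)
      assume "r \<noteq> q"
      thus False using fstrict[of r q] fstrict[of q r] r q q0 fr by (cases "r < q") auto
    qed
  qed
  from theI'[OF ex1] show ?thesis unfolding qbar0_def by blast
qed

lemma sum_core:
  fixes a v :: "nat \<Rightarrow> real" and S :: "nat set"
  assumes S: "finite S" and av: "\<And>i. i \<in> S \<Longrightarrow> 0 < a i \<and> a i \<le> v i \<and> v i \<le> 3 * a i"
    and q: "0 \<le> q"
  shows "(q + (\<Sum>i\<in>S. (a i)^2 / v i)) * (q + (\<Sum>i\<in>S. v i)) \<le> 2 * (q + (\<Sum>i\<in>S. a i))^2"
proof -
  define K where "K = (\<Sum>i\<in>S. (a i)^2 / v i)"
  define s where "s = (\<Sum>i\<in>S. v i)"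
  define A where "A = (\<Sum>i\<in>S. a i)"
  have t1: "(a i)^2 / v i + v i \<le> 4 * a i" if "i \<in> S" for i
  proof -
    have "(a i)^2 / v i \<le> a i"
      using av[OF that] by (simp add: divide_le_eq power2_eq_square mult_left_mono)
    thus ?thesis using av[OF that] by linarith
  qed
  have Ks: "K + s \<le> 4 * A" unfolding K_def s_def A_def
    using sum_mono[OF t1] by (simp add: sum.distrib sum_distrib_left)
  define F where "F i j = (a i)^2 / v i * v j" for i j
  have "K * s = (\<Sum>i\<in>S. \<Sum>j\<in>S. F i j)" unfolding K_def s_def F_def
    by (simp add: sum_product)
  moreover have "(\<Sum>i\<in>S. \<Sum>j\<in>S. F i j) = (\<Sum>i\<in>S. \<Sum>j\<in>S. F j i)" by (rule sum.swap)
  ultimately have "2 * (K * s) = (\<Sum>i\<in>S. \<Sum>j\<in>S. F i j + F j i)"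
    by (simp add: sum.distrib)
  also have "\<dots> \<le> (\<Sum>i\<in>S. \<Sum>j\<in>S. 4 * a i * a j)"
    unfolding F_def using av
    by (intro sum_mono pair_ineq) auto
  also have "\<dots> = 4 * A^2"
  proof -
    have "A^2 = (\<Sum>i\<in>S. \<Sum>j\<in>S. a i * a j)" unfolding A_def power2_eq_square by (rule sum_product)
    thus ?thesis by (simp only: sum_distrib_left mult.assoc)
  qed
  finally have KS2: "K * s \<le> 2 * A^2" by simp
  have "(q + K) * (q + s) = q^2 + q * (K + s) + K * s" by (simp add: algebra_simps power2_eq_square)
  also have "\<dots> \<le> q^2 + q * (4 * A) + 2 * A^2"
    using Ks KS2 q by (intro add_mono mult_left_mono) auto
  also have "\<dots> \<le> 2 * (q + A)^2" using q by (simp add: power2_eq_square algebra_simps)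
  finally show ?thesis unfolding K_def s_def A_def .
qed



lemma vfun_prop: "0 < q \<Longrightarrow> 0 < vfun \<theta> i q \<and> vfun \<theta> i q < 1"
  unfolding vfun_def using V_prop[of "q * exp (\<theta> i - 1)"] by simp

lemma vfun_strict: "0 < x \<Longrightarrow> x < y \<Longrightarrow> vfun \<theta> i x < vfun \<theta> i y"
  unfolding vfun_def by (intro V_strict) auto

lemma vfun_deriv: assumes "0 < q"
  shows "(vfun \<theta> i has_real_derivative aa (vfun \<theta> i q) / q) (at q)"
proof -
  define c where "c = exp (\<theta> i - 1)"
  have c: "0 < c" by (simp add: c_def)
  have "((\<lambda>q. V (q * c)) has_real_derivative (aa (V (q * c)) / (q * c)) * c) (at q)"
    by (rule DERIV_chain2[OF V_deriv]) (use assms c in \<open>auto intro!: derivative_eq_intros\<close>)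
  moreover have "(aa (V (q * c)) / (q * c)) * c = aa (V (q * c)) / q" using c by simp
  moreover have "vfun \<theta> i = (\<lambda>q. V (q * c))" by (simp add: fun_eq_iff vfun_def c_def)
  ultimately show ?thesis by (simp add: vfun_def c_def)
qed

definition ad :: "real \<Rightarrow> real" where
  "ad v = (1-v)^2 / (1 - v + v^2) - v * (1-v) * (1+v) / (1 - v + v^2)^2"

lemma aa_deriv: "(aa has_real_derivative ad v) (at v)"
proof -
  define p where "p = 1 - v + v^2"
  have p: "p \<noteq> 0" using pp_pos[of v] by (simp add: p_def)
  have dp: "((\<lambda>v. 1 - v + v^2) has_real_derivative (2 * v - 1)) (at v)"
    by (auto intro!: derivative_eq_intros)
  have dN: "((\<lambda>v. v * (1-v)^2) has_real_derivative ((1-v)^2 - 2 * v * (1-v))) (at v)"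
    by (auto intro!: derivative_eq_intros simp: algebra_simps)
  have num: "((1-v)^2 - 2 * v * (1-v)) * p - v * (1-v)^2 * (2 * v - 1) = (1-v)^2 * p - v * (1-v) * (1+v)"
    unfolding p_def by (simp add: algebra_simps power2_eq_square)
  have "(((1-v)^2 - 2 * v * (1-v)) * p - v * (1-v)^2 * (2 * v - 1)) / (p * p) = ad v"
    unfolding num ad_def p_def[symmetric] using p by (simp add: diff_divide_distrib power2_eq_square)
  moreover have "(aa has_real_derivative (((1-v)^2 - 2 * v * (1-v)) * p - v * (1-v)^2 * (2 * v - 1)) / (p * p)) (at v)"
    using DERIV_divide[OF dN dp] pp_pos[of v] unfolding aa_def p_def by (simp add: fun_eq_iff)
  ultimately show ?thesis by simp
qed



lemma aa_bounds: fixes v :: real assumes "0 < v" "v \<le> 1/2"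
  shows "0 < aa v \<and> aa v \<le> v \<and> v \<le> 3 * aa v"
proof -
  have p: "0 < 1 - v + v^2" by (rule pp_pos)
  have v1: "0 < 1 - v" using assms by simp
  have "0 < aa v" unfolding aa_def using assms p v1 by simp
  moreover have "aa v \<le> v"
  proof -
    have "(1-v)^2 \<le> 1 - v + v^2" using assms by (simp add: power2_eq_square algebra_simps)
    hence "v * (1-v)^2 \<le> v * (1 - v + v^2)" using assms by (intro mult_left_mono) auto
    thus ?thesis unfolding aa_def using p by (simp add: divide_le_eq)
  qed
  moreover have "v \<le> 3 * aa v"
  proof -
    have "0 \<le> (2 - v) * (1 - 2 * v)" using assms by simp
    hence "1 - v + v^2 \<le> 3 * (1-v)^2" by (simp add: power2_eq_square algebra_simps)
    hence "v * (1 - v + v^2) \<le> v * (3 * (1-v)^2)" using assms by (intro mult_left_mono) auto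
    thus ?thesis unfolding aa_def using p by (simp add: le_divide_eq algebra_simps)
  qed
  ultimately show ?thesis by blast
qed

lemma ad_bound: fixes v :: real assumes "0 < v" "v < 1"
  shows "ad v * aa v \<le> (aa v)^2 / v"
proof -
  have p: "0 < 1 - v + v^2" by (rule pp_pos)
  have a0: "0 \<le> aa v" unfolding aa_def using assms p by simp
  have "0 \<le> v * (1-v) * (1+v) / (1 - v + v^2)^2" using assms by simp
  hence "ad v \<le> (1-v)^2 / (1 - v + v^2)" unfolding ad_def by linarith
  also have "\<dots> = aa v / v" unfolding aa_def using assms by simp
  finally have "ad v * aa v \<le> aa v / v * aa v" using a0 by (rule mult_right_mono)
  thus ?thesis by (simp add: power2_eq_square)
qed

lemma bb_mono: fixes a b :: real assumes "0 < a" "a \<le> b" "b < 1"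
  shows "a / (1 - a + a^2) \<le> b / (1 - b + b^2)"
proof -
  have pa: "0 < 1 - a + a^2" by (rule pp_pos)
  have pb: "0 < 1 - b + b^2" by (rule pp_pos)
  have "a * (1 - b + b^2) - b * (1 - a + a^2) = (a - b) * (1 - a * b)"
    by (simp add: algebra_simps power2_eq_square)
  moreover have "a * b \<le> 1 * 1" using assms by (intro mult_mono) auto
  moreover have "(a - b) * (1 - a * b) \<le> 0" using assms \<open>a * b \<le> 1 * 1\<close>
    by (intro mult_nonpos_nonneg) auto
  ultimately have "a * (1 - b + b^2) \<le> b * (1 - a + a^2)" by linarith
  thus ?thesis using pa pb by (simp add: divide_simps)
qed



definition sv :: "(nat \<Rightarrow> real) \<Rightarrow> nat set \<Rightarrow> real \<Rightarrow> real" where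
  "sv \<theta> S q = (\<Sum>i\<in>S. vfun \<theta> i q)"
definition sa :: "(nat \<Rightarrow> real) \<Rightarrow> nat set \<Rightarrow> real \<Rightarrow> real" where
  "sa \<theta> S q = (\<Sum>i\<in>S. aa (vfun \<theta> i q))"
definition HH :: "(nat \<Rightarrow> real) \<Rightarrow> nat set \<Rightarrow> real \<Rightarrow> real" where
  "HH \<theta> S q = (q + sa \<theta> S q) / ((q + sv \<theta> S q) * (q + sv \<theta> S q))"
definition GG :: "(nat \<Rightarrow> real) \<Rightarrow> nat set \<Rightarrow> real \<Rightarrow> real" where
  "GG \<theta> S q = (\<Sum>i\<in>S. vfun \<theta> i q / (1 - vfun \<theta> i q + (vfun \<theta> i q)^2)) - HH \<theta> S q"

lemma sv_pos: "finite S \<Longrightarrow> 0 < q \<Longrightarrow> 0 \<le> sv \<theta> S q"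
  unfolding sv_def using vfun_prop by (simp add: sum_nonneg less_imp_le)

lemma sv_deriv: "0 < q \<Longrightarrow> (sv \<theta> S has_real_derivative (\<Sum>i\<in>S. aa (vfun \<theta> i q) / q)) (at q)"
  unfolding sv_def[abs_def] by (rule DERIV_sum) (rule vfun_deriv)

lemma sa_deriv: "0 < q \<Longrightarrow>
   (sa \<theta> S has_real_derivative (\<Sum>i\<in>S. ad (vfun \<theta> i q) * (aa (vfun \<theta> i q) / q))) (at q)"
  unfolding sa_def[abs_def] by (rule DERIV_sum) (rule DERIV_chain2[OF aa_deriv vfun_deriv])

lemma HH_deriv_nonpos:
  assumes S: "finite S" and q: "0 < q" and half: "\<And>i. i \<in> S \<Longrightarrow> vfun \<theta> i q < 1/2"
  shows "\<exists>y. (HH \<theta> S has_real_derivative y) (at q) \<and> y \<le> 0"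
proof -
  define v where "v i = vfun \<theta> i q" for i
  define A where "A = (\<Sum>i\<in>S. aa (v i))"
  define C where "C = (\<Sum>i\<in>S. ad (v i) * aa (v i))"
  define K where "K = (\<Sum>i\<in>S. (aa (v i))^2 / v i)"
  define s where "s = (\<Sum>i\<in>S. v i)"
  define M where "M = q + s"
  define N where "N = q + A"
  define M' where "M' = 1 + A / q"
  define N' where "N' = 1 + C / q"
  have vi: "0 < v i \<and> v i < 1" for i using vfun_prop[OF q] by (simp add: v_def)
  have s0: "0 \<le> s" unfolding s_def using vi by (simp add: sum_nonneg less_imp_le)
  have M0: "0 < M" unfolding M_def using s0 q by simp
  have dM: "((\<lambda>q. q + sv \<theta> S q) has_real_derivative M') (at q)"
  proof -
    have "((\<lambda>q. q + sv \<theta> S q) has_real_derivative 1 + (\<Sum>i\<in>S. aa (vfun \<theta> i q) / q)) (at q)"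
      by (rule DERIV_add[OF DERIV_ident sv_deriv[OF q]])
    thus ?thesis unfolding M'_def A_def v_def by (simp add: sum_divide_distrib)
  qed
  have dN: "((\<lambda>q. q + sa \<theta> S q) has_real_derivative N') (at q)"
  proof -
    have "((\<lambda>q. q + sa \<theta> S q) has_real_derivative 1 + (\<Sum>i\<in>S. ad (vfun \<theta> i q) * (aa (vfun \<theta> i q) / q))) (at q)"
      by (rule DERIV_add[OF DERIV_ident sa_deriv[OF q]])
    thus ?thesis unfolding N'_def C_def v_def by (simp add: sum_divide_distrib times_divide_eq_right)
  qed
  have Mq: "q + sv \<theta> S q = M" unfolding M_def s_def sv_def v_def ..
  have Nq: "q + sa \<theta> S q = N" unfolding N_def A_def sa_def v_def ..
  have dMM: "((\<lambda>q. (q + sv \<theta> S q) * (q + sv \<theta> S q)) has_real_derivative M' * M + M' * M) (at q)"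
    using DERIV_mult[OF dM dM] unfolding Mq .
  have dH: "(HH \<theta> S has_real_derivative (N' * (M * M) - N * (M' * M + M' * M)) / ((M * M) * (M * M))) (at q)"
  proof -
    have "M * M \<noteq> 0" using M0 by simp
    from DERIV_divide[OF dN dMM, unfolded Mq Nq, OF this]
    show ?thesis unfolding HH_def[abs_def] .
  qed
  have CK: "C \<le> K" unfolding C_def K_def using vi by (intro sum_mono ad_bound) auto
  have core: "(q + K) * (q + s) \<le> 2 * (q + A)^2" unfolding K_def s_def A_def
    using sum_core[OF S, of "\<lambda>i. aa (v i)" v q] q aa_bounds vi half v_def
    by (simp add: less_imp_le)
  have "(q + C) * M \<le> (q + K) * M" using CK M0 by (intro mult_right_mono) auto
  also have "\<dots> \<le> 2 * N^2" using core unfolding M_def N_def .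
  finally have key: "(q + C) * M - 2 * N^2 \<le> 0" by simp
  have eq: "N' * (M * M) - N * (M' * M + M' * M) = (M / q) * ((q + C) * M - 2 * N^2)"
    unfolding N'_def M'_def N_def using q by (simp add: field_simps power2_eq_square)
  have "(M / q) * ((q + C) * M - 2 * N^2) \<le> 0"
    using key M0 q by (intro mult_nonneg_nonpos) auto
  hence "(N' * (M * M) - N * (M' * M + M' * M)) / ((M * M) * (M * M)) \<le> 0"
    unfolding eq using M0 by (intro divide_nonpos_pos) auto
  with dH show ?thesis by blast
qed



lemma term_eq: fixes v a q :: real
  assumes "0 < v" "v < 1" "0 < q" "a = aa v"
  shows "(a / q * (1 - v) - v * (0 - a / q)) / ((1 - v) * (1 - v)) = v / (1 - v + v^2) / q"
proof -
  have p: "0 < 1 - v + v^2" by (rule pp_pos)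
  have v1: "1 - v \<noteq> 0" using assms by simp
  have "(a / q * (1 - v) - v * (0 - a / q)) = a / q" using assms(3) by (simp add: field_simps)
  hence "(a / q * (1 - v) - v * (0 - a / q)) / ((1 - v) * (1 - v)) = a / ((1 - v) * (1 - v)) / q"
    by simp
  also have "a / ((1 - v) * (1 - v)) = v / (1 - v + v^2)"
    unfolding assms(4) aa_def using v1 p by (simp add: power2_eq_square)
  finally show ?thesis .
qed

lemma RS_deriv: assumes S: "finite S" and q: "0 < q"
  shows "(RS \<theta> S has_real_derivative GG \<theta> S q / q) (at q)"
proof -
  have d1: "((\<lambda>q. vfun \<theta> i q / (1 - vfun \<theta> i q)) has_real_derivative
      vfun \<theta> i q / (1 - vfun \<theta> i q + (vfun \<theta> i q)^2) / q) (at q)" for i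
  proof -
    have v: "0 < vfun \<theta> i q" "vfun \<theta> i q < 1" using vfun_prop[OF q] by auto
    have "1 - vfun \<theta> i q \<noteq> 0" using v by simp
    from DERIV_divide[OF vfun_deriv[of q \<theta> i, OF q] DERIV_diff[OF DERIV_const vfun_deriv[of q \<theta> i, OF q]] this]
    show ?thesis unfolding term_eq[OF v q refl] .
  qed
  define M where "M = q + sv \<theta> S q"
  have M0: "0 < M" unfolding M_def using sv_pos[of S q \<theta>, OF S q] q by simp
  have dM: "((\<lambda>q. q + sv \<theta> S q) has_real_derivative 1 + sa \<theta> S q / q) (at q)"
  proof -
    have "((\<lambda>q. q + sv \<theta> S q) has_real_derivative 1 + (\<Sum>i\<in>S. aa (vfun \<theta> i q) / q)) (at q)"
      by (rule DERIV_add[OF DERIV_ident sv_deriv[OF q]])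
    thus ?thesis unfolding sa_def by (simp add: sum_divide_distrib)
  qed
  have d2: "((\<lambda>q. 1 / (q + sv \<theta> S q)) has_real_derivative - HH \<theta> S q / q) (at q)"
  proof -
    have "q + sv \<theta> S q \<noteq> 0" using M0 M_def by simp
    from DERIV_divide[OF DERIV_const dM this]
    have "((\<lambda>q. 1 / (q + sv \<theta> S q)) has_real_derivative
       (0 * M - 1 * (1 + sa \<theta> S q / q)) / (M * M)) (at q)" unfolding M_def .
    moreover have "(0 * M - 1 * (1 + sa \<theta> S q / q)) / (M * M) = - HH \<theta> S q / q"
      unfolding HH_def M_def[symmetric] using q M0 by (simp add: field_simps)
    ultimately show ?thesis by simp
  qed
  have "((\<lambda>q. (\<Sum>i\<in>S. vfun \<theta> i q / (1 - vfun \<theta> i q)) + 1 / (q + sv \<theta> S q) - 1)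
     has_real_derivative
      (\<Sum>i\<in>S. vfun \<theta> i q / (1 - vfun \<theta> i q + (vfun \<theta> i q)^2) / q) + - HH \<theta> S q / q - 0) (at q)"
    by (intro DERIV_diff DERIV_add DERIV_sum d1 d2 DERIV_const)
  moreover have "RS \<theta> S = (\<lambda>q. (\<Sum>i\<in>S. vfun \<theta> i q / (1 - vfun \<theta> i q)) + 1 / (q + sv \<theta> S q) - 1)"
    by (simp add: fun_eq_iff RS_def sv_def)
  moreover have "(\<Sum>i\<in>S. vfun \<theta> i q / (1 - vfun \<theta> i q + (vfun \<theta> i q)^2) / q) + - HH \<theta> S q / q - 0
      = GG \<theta> S q / q" unfolding GG_def by (simp add: sum_divide_distrib diff_divide_distrib)
  ultimately show ?thesis by simp
qed

lemma GG_mono: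
  assumes S: "finite S" and x: "0 < x" "x \<le> y"
    and half: "\<And>i q. i \<in> S \<Longrightarrow> x \<le> q \<Longrightarrow> q \<le> y \<Longrightarrow> vfun \<theta> i q < 1/2"
  shows "GG \<theta> S x \<le> GG \<theta> S y"
proof -
  have "(\<Sum>i\<in>S. vfun \<theta> i x / (1 - vfun \<theta> i x + (vfun \<theta> i x)^2))
      \<le> (\<Sum>i\<in>S. vfun \<theta> i y / (1 - vfun \<theta> i y + (vfun \<theta> i y)^2))"
  proof (rule sum_mono)
    fix i assume i: "i \<in> S"
    have le: "vfun \<theta> i x \<le> vfun \<theta> i y"
      using vfun_strict[of x y \<theta> i] x by (cases "x = y") auto
    show "vfun \<theta> i x / (1 - vfun \<theta> i x + (vfun \<theta> i x)^2) \<le> vfun \<theta> i y / (1 - vfun \<theta> i y + (vfun \<theta> i y)^2)"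
      using bb_mono[OF _ le] vfun_prop[of x \<theta> i] vfun_prop[of y \<theta> i] x by auto
  qed
  moreover have "HH \<theta> S y \<le> HH \<theta> S x"
  proof (rule DERIV_nonpos_imp_nonincreasing[OF x(2)])
    fix t assume t: "x \<le> t" "t \<le> y"
    show "\<exists>d. (HH \<theta> S has_real_derivative d) (at t) \<and> d \<le> 0"
      using HH_deriv_nonpos[OF S, of t \<theta>] half t x by auto
  qed
  ultimately show ?thesis unfolding GG_def by linarith
qed

lemma qc_core:
  assumes S: "finite S" and lo: "0 < lo"
    and half: "\<And>i q. i \<in> S \<Longrightarrow> lo \<le> q \<Longrightarrow> q \<le> hi \<Longrightarrow> vfun \<theta> i q < 1/2"
    and xz: "lo \<le> x" "x \<le> z" "z \<le> y" "y \<le> hi"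
  shows "RS \<theta> S z \<le> max (RS \<theta> S x) (RS \<theta> S y)"
proof (rule ccontr)
  assume "\<not> ?thesis"
  hence gx: "RS \<theta> S x < RS \<theta> S z" and gy: "RS \<theta> S y < RS \<theta> S z" by auto
  have xz': "x < z" using gx xz by (cases "x = z") auto
  have zy': "z < y" using gy xz by (cases "z = y") auto
  have der: "(RS \<theta> S has_real_derivative GG \<theta> S t / t) (at t)" if "x \<le> t" for t
    using RS_deriv[OF S, of t \<theta>] that lo xz by auto
  have "\<exists>\<xi>>x. \<xi> < z \<and> RS \<theta> S z - RS \<theta> S x = (z - x) * (GG \<theta> S \<xi> / \<xi>)"
    by (rule MVT2[OF xz'], rule der) auto
  then obtain \<xi>1 where x1: "x < \<xi>1" "\<xi>1 < z" "RS \<theta> S z - RS \<theta> S x = (z - x) * (GG \<theta> S \<xi>1 / \<xi>1)"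
    by auto
  have "\<exists>\<xi>>z. \<xi> < y \<and> RS \<theta> S y - RS \<theta> S z = (y - z) * (GG \<theta> S \<xi> / \<xi>)"
    by (rule MVT2[OF zy'], rule der) (use xz in auto)
  then obtain \<xi>2 where x2: "z < \<xi>2" "\<xi>2 < y" "RS \<theta> S y - RS \<theta> S z = (y - z) * (GG \<theta> S \<xi>2 / \<xi>2)"
    by auto
  have p1: "0 < \<xi>1" "0 < \<xi>2" using x1 x2 xz lo by auto
  have "0 < (z - x) * (GG \<theta> S \<xi>1 / \<xi>1)" using x1 gx by simp
  hence "0 < GG \<theta> S \<xi>1 / \<xi>1" using xz' zero_less_mult_pos[of "z - x" "GG \<theta> S \<xi>1 / \<xi>1"] by simp
  hence g1: "0 < GG \<theta> S \<xi>1" using p1 by (simp add: zero_less_divide_iff)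
  have "(y - z) * (GG \<theta> S \<xi>2 / \<xi>2) < 0" using x2 gy by simp
  hence "GG \<theta> S \<xi>2 / \<xi>2 < 0" using zy' mult_nonneg_nonneg[of "y - z" "GG \<theta> S \<xi>2 / \<xi>2"] by linarith
  hence g2: "GG \<theta> S \<xi>2 < 0" using p1 by (simp add: divide_less_0_iff)
  have "GG \<theta> S \<xi>1 \<le> GG \<theta> S \<xi>2"
  proof (rule GG_mono[OF S p1(1)])
    show "\<xi>1 \<le> \<xi>2" using x1 x2 by simp
    fix i q assume "i \<in> S" "\<xi>1 \<le> q" "q \<le> \<xi>2"
    thus "vfun \<theta> i q < 1/2" using x1 x2 xz by (intro half) auto
  qed
  thus False using g1 g2 by simp
qed



theorem lemma5:
  fixes n :: nat and \<theta> :: "nat \<Rightarrow> real" and S :: "nat set"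
  assumes mono: "\<And>i j. 1 \<le> i \<Longrightarrow> i \<le> j \<Longrightarrow> j \<le> n \<Longrightarrow> \<theta> j \<le> \<theta> i"
    and nonneg: "\<And>i. 1 \<le> i \<Longrightarrow> i \<le> n \<Longrightarrow> 0 \<le> \<theta> i"
    and S_sub: "S \<subset> {1..n}" and S_ne: "S \<noteq> {}"
    and half: "\<And>i q. i \<in> S \<Longrightarrow>
        qbar0 \<theta> (insert (Min ({1..n} - S)) S) \<le> q \<Longrightarrow> q \<le> qbar0 \<theta> S \<Longrightarrow>
        vfun \<theta> i q < 1 / 2"
  shows "quasi_convex_on {qbar0 \<theta> (insert (Min ({1..n} - S)) S) .. qbar0 \<theta> S} (RS \<theta> S)"
proof -
  define lo where "lo = qbar0 \<theta> (insert (Min ({1..n} - S)) S)"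
  define hi where "hi = qbar0 \<theta> S"
  have fS: "finite S" using S_sub by (meson finite_atLeastAtMost finite_subset psubset_imp_subset)
  have lo0: "0 < lo" unfolding lo_def using fS by (intro qbar0_pos) auto
  have half': "\<And>i q. i \<in> S \<Longrightarrow> lo \<le> q \<Longrightarrow> q \<le> hi \<Longrightarrow> vfun \<theta> i q < 1/2"
    using half unfolding lo_def hi_def by blast
  have core: "RS \<theta> S (t * x + (1 - t) * y) \<le> max (RS \<theta> S x) (RS \<theta> S y)"
    if xy: "lo \<le> x" "x \<le> hi" "lo \<le> y" "y \<le> hi" "x \<le> y" and t: "0 \<le> t" "t \<le> 1" for x y t :: real
  proof -
    have "0 \<le> (1 - t) * (y - x)" "0 \<le> t * (y - x)" using xy t by auto
    hence "x \<le> t * x + (1 - t) * y" "t * x + (1 - t) * y \<le> y" by (simp_all add: algebra_simps)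
    thus ?thesis using qc_core[OF fS lo0 half'] xy by blast
  qed
  show ?thesis unfolding quasi_convex_on_def lo_def[symmetric] hi_def[symmetric]
  proof (intro ballI allI impI)
    fix x y :: real and t :: real assume x: "x \<in> {lo..hi}" and y: "y \<in> {lo..hi}" and t: "0 \<le> t \<and> t \<le> 1"
    show "RS \<theta> S (t * x + (1 - t) * y) \<le> max (RS \<theta> S x) (RS \<theta> S y)"
    proof (cases "x \<le> y")
      case True thus ?thesis using core x y t by auto
    next
      case False
      have "RS \<theta> S ((1 - t) * y + (1 - (1 - t)) * x) \<le> max (RS \<theta> S y) (RS \<theta> S x)"
        using core[of y x "1 - t"] x y t False by auto
      thus ?thesis by (simp add: max.commute add.commute)
    qed
  qed
qed


end
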